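(* Let $p$ be a prime and let $\Lambda$ be a finite, simple, connected graph with at least $3$ vertices such that $|\mathrm{V}(\Lambda)|$ and $|\mathrm{E}(\Lambda)|$ are both powers of $p$. Let $G\le\mathrm{Aut}(\Lambda)$ be transitive on both $\mathrm{V}(\Lambda)$ and $\mathrm{E}(\Lambda)$. Then $G$ contains an element which acts semiregularly on each of $\mathrm{V}(\Lambda)$ and $\mathrm{E}(\Lambda)$.
   Context: A non-identity element $g$ acts semiregularly on a set if the cyclic group $\langle g\rangle$ acts on it with all point stabilisers trivial. *)

theory Defs
  imports "HOL-Algebra.Algebra"
begin

definition simple_graph :: "'a set \<Rightarrow> 'a set set \<Rightarrow> bool" where
  "simple_graph V E \<longleftrightarrow> finite V \<and> (\<forall>e\<in>E. e \<subseteq> V \<and> card e = 2)"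

definition adj :: "'a set set \<Rightarrow> 'a \<Rightarrow> 'a \<Rightarrow> bool" where
  "adj E x y \<longleftrightarrow> {x, y} \<in> E"

definition connected_graph :: "'a set \<Rightarrow> 'a set set \<Rightarrow> bool" where
  "connected_graph V E \<longleftrightarrow> V \<noteq> {} \<and>
     (\<forall>x\<in>V. \<forall>y\<in>V. (x, y) \<in> {(u, v). adj E u v}\<^sup>*)"

definition graph_aut :: "'a set \<Rightarrow> 'a set set \<Rightarrow> ('a \<Rightarrow> 'a) set" where
  "graph_aut V E = {g \<in> Bij V. \<forall>x\<in>V. \<forall>y\<in>V. {x, y} \<in> E \<longleftrightarrow> {g x, g y} \<in> E}"

definition is_prime_power :: "nat \<Rightarrow> nat \<Rightarrow> bool" where
  "is_prime_power p n \<longleftrightarrow> (\<exists>k. n = p ^ k)"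

definition semiregular_on_vertices :: "'a set \<Rightarrow> ('a \<Rightarrow> 'a) \<Rightarrow> bool" where
  "semiregular_on_vertices V g \<longleftrightarrow>
     g \<noteq> \<one>\<^bsub>BijGroup V\<^esub> \<and>
     (\<forall>k::nat. \<forall>x\<in>V. (g [^]\<^bsub>BijGroup V\<^esub> k) x = x \<longrightarrow> g [^]\<^bsub>BijGroup V\<^esub> k = \<one>\<^bsub>BijGroup V\<^esub>)"

definition semiregular_on_edges :: "'a set \<Rightarrow> 'a set set \<Rightarrow> ('a \<Rightarrow> 'a) \<Rightarrow> bool" where
  "semiregular_on_edges V E g \<longleftrightarrow>
     g \<noteq> \<one>\<^bsub>BijGroup V\<^esub> \<and>
     (\<forall>k::nat. \<forall>e\<in>E. (g [^]\<^bsub>BijGroup V\<^esub> k) ` e = e \<longrightarrow> g [^]\<^bsub>BijGroup V\<^esub> k = \<one>\<^bsub>BijGroup V\<^esub>)"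

end

theory Submission
  imports Defs
begin

lemma (in group_action) orbit_card_ppow:
  assumes "Factorial_Ring.prime p" "order G = p ^ n" "x \<in> E"
  shows "\<exists>j\<le>n. card (orbit G \<phi> x) = p ^ j"
proof -
  have "card (orbit G \<phi> x) dvd p ^ n"
    using orbit_stabilizer_theorem[OF assms(3)] assms(2) by (metis dvd_triv_left)
  thus ?thesis using divides_primepow_nat[OF assms(1)] by blast
qed

lemma (in group_action) fix_mod:
  assumes p: "Factorial_Ring.prime p" and ord: "order G = p ^ n" and fin: "finite E"
  shows "card E mod p = card {x\<in>E. \<forall>g\<in>carrier G. \<phi> g x = x} mod p"
proof -
  define F where "F = {x\<in>E. \<forall>g\<in>carrier G. \<phi> g x = x}"
  define Os where "Os = orbits G E \<phi>"
  define Oa where "Oa = {ob\<in>Os. card ob = 1}"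
  define Ob where "Ob = {ob\<in>Os. card ob \<noteq> 1}"
  have finOs: "finite Os" unfolding Os_def orbits_def using fin by simp
  have cE: "card E = (\<Sum>ob\<in>Os. card ob)"
  proof -
    have "(\<Sum>ob\<in>Os. card ob) = (\<Sum>ob\<in>Os. \<Sum>x\<in>ob. 1)" by simp
    also have "\<dots> = (\<Sum>x\<in>E. 1)" using disjoint_sum[OF fin, of "\<lambda>_. (1::nat)"] unfolding Os_def by simp
    finally show ?thesis by simp
  qed
  also have "\<dots> = (\<Sum>ob\<in>Oa. card ob) + (\<Sum>ob\<in>Ob. card ob)"
    unfolding Oa_def Ob_def using finOs
    by (subst sum.union_disjoint[symmetric]) (auto intro: sum.cong)
  also have "(\<Sum>ob\<in>Oa. card ob) = card Oa" unfolding Oa_def by simp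
  finally have eq: "card E = card Oa + (\<Sum>ob\<in>Ob. card ob)" .
  have "p dvd (\<Sum>ob\<in>Ob. card ob)"
  proof (rule dvd_sum)
    fix ob assume "ob \<in> Ob"
    then obtain x where x: "x \<in> E" "ob = orbit G \<phi> x" "card ob \<noteq> 1"
      unfolding Ob_def Os_def orbits_def by auto
    then obtain j where "card ob = p ^ j" using orbit_card_ppow[OF p ord] by blast
    with x(3) have "j \<noteq> 0" by auto
    thus "p dvd card ob" using \<open>card ob = p ^ j\<close> by (simp add: dvd_power)
  qed
  moreover have "Oa = (\<lambda>x. {x}) ` F"
  proof
    show "Oa \<subseteq> (\<lambda>x. {x}) ` F"
    proof
      fix ob assume "ob \<in> Oa"
      then obtain x where x: "x \<in> E" "ob = orbit G \<phi> x" "card ob = 1"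
        unfolding Oa_def Os_def orbits_def by auto
      have xo: "x \<in> ob" using x orbit_refl by simp
      then have os: "ob = {x}" using x(3) by (metis card_1_singletonE singletonD)
      have "\<forall>g\<in>carrier G. \<phi> g x = x"
        using os x(2) unfolding orbit_def by blast
      thus "ob \<in> (\<lambda>x. {x}) ` F" using os x(1) F_def by auto
    qed
  next
    show "(\<lambda>x. {x}) ` F \<subseteq> Oa"
    proof
      fix ob assume "ob \<in> (\<lambda>x. {x}) ` F"
      then obtain x where x: "x \<in> F" "ob = {x}" by auto
      have "orbit G \<phi> x = {x}"
        using x orbit_refl[of x] unfolding F_def orbit_def by auto
      thus "ob \<in> Oa" using x unfolding Oa_def Os_def orbits_def F_def by auto
    qed
  qed
  hence "card Oa = card F" by (simp add: card_image)
  ultimately have "card E = card F + (\<Sum>ob\<in>Ob. card ob)" "p dvd (\<Sum>ob\<in>Ob. card ob)" using eq by auto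
  then show ?thesis unfolding F_def[symmetric] by (auto elim!: dvdE)
qed

lemma (in group) center_nontrivial:
  assumes p: "Factorial_Ring.prime p" and ord: "order G = p ^ n" and n: "n \<ge> 1"
  shows "\<exists>z\<in>carrier G. z \<noteq> \<one> \<and> (\<forall>g\<in>carrier G. g \<otimes> z = z \<otimes> g)"
proof -
  interpret A: group_action G "carrier G" "\<lambda>g. (\<lambda>h \<in> carrier G. g \<otimes> h \<otimes> (inv g))"
    by (rule action_by_conjugation)
  define F where "F = {x\<in>carrier G. \<forall>g\<in>carrier G. (\<lambda>h \<in> carrier G. g \<otimes> h \<otimes> (inv g)) x = x}"
  have p1: "p > 1" using p prime_gt_1_nat by blast
  have "0 < order G" using ord p1 by simp
  hence finC: "finite (carrier G)" unfolding order_def by (rule card_ge_0_finite)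
  have "card (carrier G) mod p = card F mod p"
    using A.fix_mod[OF p ord finC] F_def by simp
  moreover have "p dvd card (carrier G)" using ord n unfolding order_def by (simp add: dvd_power)
  ultimately have "p dvd card F" by (simp add: mod_eq_0_iff_dvd[symmetric])
  moreover have one: "\<one> \<in> F" unfolding F_def by simp
  moreover have finF: "finite F" using finC unfolding F_def by simp
  ultimately have "card F > 0" using card_gt_0_iff by blast
  with \<open>p dvd card F\<close> have "p \<le> card F" by (simp add: dvd_imp_le)
  hence c2: "card F \<ge> 2" using p1 by simp
  have "\<not> F \<subseteq> {\<one>}"
  proof
    assume "F \<subseteq> {\<one>}"
    hence "card F \<le> 1" using card_mono[of "{\<one>}" F] by simp
    thus False using c2 by simp
  qed
  then obtain z where z: "z \<in> F" "z \<noteq> \<one>" by blast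
  have "\<forall>g\<in>carrier G. g \<otimes> z = z \<otimes> g"
  proof
    fix g assume g: "g \<in> carrier G"
    have zc: "z \<in> carrier G" using z F_def by auto
    have "g \<otimes> z \<otimes> inv g = z" using z g F_def by auto
    hence "g \<otimes> z \<otimes> inv g \<otimes> g = z \<otimes> g" by simp
    thus "g \<otimes> z = z \<otimes> g" using g zc by (simp add: m_assoc)
  qed
  thus ?thesis using z F_def by auto
qed

lemma (in group_action) sylow_transitive:
  assumes p: "Factorial_Ring.prime p" and finG: "finite (carrier G)"
    and ord: "order G = p ^ a * m" and nd: "\<not> p dvd m"
    and P: "subgroup P G" and cP: "card P = p ^ a"
    and tr: "\<forall>x\<in>E. \<forall>y\<in>E. \<exists>g\<in>carrier G. \<phi> g x = y"
    and cE: "card E = p ^ k" and x: "x \<in> E" and y: "y \<in> E"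
  shows "\<exists>g\<in>P. \<phi> g x = y"
proof -
  interpret H: group_action "G\<lparr>carrier := P\<rparr>" E \<phi> using induced_action[OF P] .
  have grp: "group G" using group_hom group_hom.axioms(1) by blast
  have p1: "p > 1" using p prime_gt_1_nat by blast
  have finE: "finite E" using cE p1 by (metis card.infinite not_one_le_zero one_le_power less_imp_le)
  have orbG: "orbit G \<phi> x = E"
  proof
    show "orbit G \<phi> x \<subseteq> E" unfolding orbit_def using x element_image by blast
    show "E \<subseteq> orbit G \<phi> x" unfolding orbit_def using tr x by fastforce
  qed
  define S where "S = stabilizer G \<phi> x"
  define T where "T = stabilizer (G\<lparr>carrier := P\<rparr>) \<phi> x"
  have SG: "subgroup S G" unfolding S_def using stabilizer_subgroup[OF x] .
  have TPS: "T = P \<inter> S" unfolding T_def S_def stabilizer_def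
    using P subgroup.subset by fastforce
  have TG: "subgroup T G" unfolding TPS using group.subgroups_Inter_pair[OF grp P SG] .
  have TS: "subgroup T (G\<lparr>carrier := S\<rparr>)"
    using group.subgroup_incl[OF grp TG SG] TPS by blast
  have grpS: "group (G\<lparr>carrier := S\<rparr>)" using group.subgroup_imp_group[OF grp SG] .
  have "card (rcosets\<^bsub>G\<lparr>carrier := S\<rparr>\<^esub> T) * card T = card S"
    using group.lagrange[OF grpS TS] by (simp add: order_def)
  hence TdS: "card T dvd card S" by (metis dvd_triv_right)
  have e1: "card (orbit (G\<lparr>carrier := P\<rparr>) \<phi> x) * card T = p ^ a"
    using H.orbit_stabilizer_theorem[OF x] cP unfolding T_def by (simp add: order_def)
  have e2: "card E * card S = p ^ a * m"
    using orbit_stabilizer_theorem[OF x] ord orbG unfolding S_def by simp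
  have "card T dvd p ^ a" using e1 by (metis dvd_triv_right)
  then obtain j where j: "j \<le> a" "card T = p ^ j" using divides_primepow_nat[OF p] by blast
  have "p ^ k * p ^ j dvd p ^ a * m" using e2 cE j TdS by (metis mult_dvd_mono dvd_refl)
  hence "p ^ (k + j) dvd p ^ a * m" by (simp add: power_add)
  moreover have "coprime (p ^ (k + j)) m"
    using nd p by (simp add: coprime_power_left_iff prime_imp_coprime)
  ultimately have "p ^ (k + j) dvd p ^ a" using coprime_dvd_mult_left_iff by blast
  hence kj: "k + j \<le> a" using p1 by (simp add: dvd_power_iff_le)
  have "card (orbit (G\<lparr>carrier := P\<rparr>) \<phi> x) = p ^ (a - j)"
  proof -
    have "p ^ a = p ^ (a - j) * p ^ j" using j by (simp add: power_add[symmetric])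
    moreover have "p ^ j \<noteq> 0" using p1 by simp
    ultimately show ?thesis using e1 j by (metis mult_right_cancel)
  qed
  hence cge: "card (orbit (G\<lparr>carrier := P\<rparr>) \<phi> x) \<ge> card E"
    using cE kj p1 by (simp add: power_increasing)
  have sub: "orbit (G\<lparr>carrier := P\<rparr>) \<phi> x \<subseteq> E"
    unfolding orbit_def using x H.element_image by blast
  hence "orbit (G\<lparr>carrier := P\<rparr>) \<phi> x = E" using cge finE by (simp add: card_seteq)
  hence "y \<in> orbit (G\<lparr>carrier := P\<rparr>) \<phi> x" using y by simp
  thus ?thesis unfolding orbit_def by auto
qed


lemma pow_in_comm:
  assumes grp: "group B" and P: "subgroup P B" and z: "z \<in> P"
    and c: "\<forall>g\<in>P. g \<otimes>\<^bsub>B\<^esub> z = z \<otimes>\<^bsub>B\<^esub> g"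
  shows "z [^]\<^bsub>B\<^esub> (k::nat) \<in> P \<and> (\<forall>g\<in>P. g \<otimes>\<^bsub>B\<^esub> (z [^]\<^bsub>B\<^esub> k) = (z [^]\<^bsub>B\<^esub> k) \<otimes>\<^bsub>B\<^esub> g)"
proof (induction k)
  case 0
  interpret group B by (rule grp)
  have sub: "P \<subseteq> carrier B" using P subgroup.subset by blast
  have "\<forall>g\<in>P. g \<otimes>\<^bsub>B\<^esub> \<one>\<^bsub>B\<^esub> = \<one>\<^bsub>B\<^esub> \<otimes>\<^bsub>B\<^esub> g"
  proof
    fix g assume "g \<in> P"
    hence "g \<in> carrier B" using sub by blast
    thus "g \<otimes>\<^bsub>B\<^esub> \<one>\<^bsub>B\<^esub> = \<one>\<^bsub>B\<^esub> \<otimes>\<^bsub>B\<^esub> g" by simp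
  qed
  moreover have "\<one>\<^bsub>B\<^esub> \<in> P" using P by (rule subgroup.one_closed)
  ultimately show ?case by simp
next
  case (Suc k)
  interpret group B by (rule grp)
  let ?h = "z [^]\<^bsub>B\<^esub> k"
  have h: "?h \<in> P" using Suc by blast
  have IH: "\<And>g. g \<in> P \<Longrightarrow> g \<otimes>\<^bsub>B\<^esub> ?h = ?h \<otimes>\<^bsub>B\<^esub> g" using Suc by blast
  have sub: "P \<subseteq> carrier B" using P subgroup.subset by blast
  have "?h \<otimes>\<^bsub>B\<^esub> z \<in> P" by (rule subgroup.m_closed[OF P h z])
  moreover have "\<forall>g\<in>P. g \<otimes>\<^bsub>B\<^esub> (?h \<otimes>\<^bsub>B\<^esub> z) = (?h \<otimes>\<^bsub>B\<^esub> z) \<otimes>\<^bsub>B\<^esub> g"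
  proof
    fix g assume g: "g \<in> P"
    have gc: "g \<in> carrier B" and hc: "?h \<in> carrier B" and zc: "z \<in> carrier B"
      using g h z sub by auto
    have c1: "g \<otimes>\<^bsub>B\<^esub> ?h = ?h \<otimes>\<^bsub>B\<^esub> g" using IH[OF g] .
    have c2: "g \<otimes>\<^bsub>B\<^esub> z = z \<otimes>\<^bsub>B\<^esub> g" using c g by blast
    have "g \<otimes>\<^bsub>B\<^esub> (?h \<otimes>\<^bsub>B\<^esub> z) = (g \<otimes>\<^bsub>B\<^esub> ?h) \<otimes>\<^bsub>B\<^esub> z"
      using gc hc zc by (simp only: m_assoc)
    also have "\<dots> = (?h \<otimes>\<^bsub>B\<^esub> g) \<otimes>\<^bsub>B\<^esub> z" by (simp only: c1)
    also have "\<dots> = ?h \<otimes>\<^bsub>B\<^esub> (g \<otimes>\<^bsub>B\<^esub> z)" using gc hc zc by (simp only: m_assoc)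
    also have "\<dots> = ?h \<otimes>\<^bsub>B\<^esub> (z \<otimes>\<^bsub>B\<^esub> g)" by (simp only: c2)
    also have "\<dots> = (?h \<otimes>\<^bsub>B\<^esub> z) \<otimes>\<^bsub>B\<^esub> g" using gc hc zc by (simp only: m_assoc)
    finally show "g \<otimes>\<^bsub>B\<^esub> (?h \<otimes>\<^bsub>B\<^esub> z) = (?h \<otimes>\<^bsub>B\<^esub> z) \<otimes>\<^bsub>B\<^esub> g" .
  qed
  moreover have pw: "z [^]\<^bsub>B\<^esub> Suc k = ?h \<otimes>\<^bsub>B\<^esub> z" by (rule nat_pow_Suc)
  ultimately show ?case unfolding pw by blast
qed

lemma two_nbrs:
  assumes "simple_graph V E" "connected_graph V E" "card V \<ge> 3"
  shows "\<exists>x y w. {x, y} \<in> E \<and> {x, w} \<in> E \<and> y \<noteq> w"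
proof (rule ccontr)
  assume H: "\<not> ?thesis"
  let ?R = "{(u, v). adj E u v}"
  have finV: "finite V" using assms(1) unfolding simple_graph_def by blast
  have conn: "V \<noteq> {}" "\<And>x y. x \<in> V \<Longrightarrow> y \<in> V \<Longrightarrow> (x, y) \<in> ?R\<^sup>*"
    using assms(2) unfolding connected_graph_def by auto
  obtain a where a: "a \<in> V" using conn(1) by blast
  have "\<not> V \<subseteq> {a}"
  proof
    assume "V \<subseteq> {a}"
    hence "card V \<le> card {a}" by (intro card_mono) auto
    thus False using assms(3) by simp
  qed
  then obtain b where b: "b \<in> V" "b \<noteq> a" by blast
  have "(a, b) \<in> ?R\<^sup>*" using conn(2) a b(1) by blast
  hence "\<exists>c. (a, c) \<in> ?R" using b(2) by (induct rule: converse_rtrancl_induct) auto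
  then obtain c where c: "(a, c) \<in> ?R" by blast
  hence ac: "{a, c} \<in> E" by (simp add: adj_def)
  have reach: "z \<in> {a, c}" if "(a, z) \<in> ?R\<^sup>*" for z
    using that
  proof (induction rule: rtrancl_induct)
    case base
    then show ?case by simp
  next
    case (step z u)
    hence zu: "{z, u} \<in> E" by (simp add: adj_def)
    show ?case
    proof (cases "z = a")
      case True
      then show ?thesis using zu ac H by blast
    next
      case False
      hence "z = c" using step by simp
      moreover have "{c, a} \<in> E" using ac by (simp add: insert_commute)
      ultimately show ?thesis using zu H by blast
    qed
  qed
  have "V \<subseteq> {a, c}" using reach conn(2) a by blast
  hence "card V \<le> card {a, c}" by (intro card_mono) auto
  moreover have "card {a, c} \<le> 2" by (cases "a = c") auto
  ultimately have "card V \<le> 2" by linarith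
  thus False using assms(3) by simp
qed

lemma bij_mult:
  assumes "f \<in> Bij V" "g \<in> Bij V"
  shows "f \<otimes>\<^bsub>BijGroup V\<^esub> g = compose V f g"
  using assms by (simp add: BijGroup_def)

lemma finite_Bij:
  assumes "finite V" shows "finite (Bij V)"
proof -
  have "Bij V \<subseteq> V \<rightarrow>\<^sub>E V"
  proof
    fix f assume "f \<in> Bij V"
    hence "f \<in> extensional V" "bij_betw f V V" by (auto simp: Bij_def)
    thus "f \<in> V \<rightarrow>\<^sub>E V" by (auto simp: PiE_iff dest: bij_betwE)
  qed
  moreover have "finite (V \<rightarrow>\<^sub>E V)" using assms by (simp add: finite_PiE)
  ultimately show ?thesis by (rule finite_subset)
qed

lemma aut_maps_edge:
  assumes "simple_graph V E" "g \<in> graph_aut V E" "e \<in> E"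
  shows "g ` e \<in> E"
proof -
  have "e \<subseteq> V" "card e = 2" using assms(1,3) unfolding simple_graph_def by auto
  then obtain x y where xy: "e = {x, y}" "x \<in> V" "y \<in> V" by (auto simp: card_2_iff)
  hence "{g x, g y} \<in> E" using assms(2,3) unfolding graph_aut_def by blast
  thus ?thesis using xy by simp
qed

lemma key:
  assumes sg: "simple_graph V E" and e1: "{x, y} \<in> E" and e2: "{x, w} \<in> E" and yw: "y \<noteq> w"
    and hB: "h \<in> Bij V"
    and trV: "\<forall>x\<in>V. \<forall>y\<in>V. \<exists>g\<in>P. g x = y"
    and trE: "\<forall>e\<in>E. \<forall>f\<in>E. \<exists>g\<in>P. g ` e = f"
    and PB: "P \<subseteq> Bij V"
    and comm: "\<forall>g\<in>P. \<forall>v\<in>V. g (h v) = h (g v)"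
  shows "(\<forall>v\<in>V. h v = v \<longrightarrow> h = (\<lambda>x\<in>V. x)) \<and> (\<forall>e\<in>E. h ` e = e \<longrightarrow> h = (\<lambda>x\<in>V. x))"
proof -
  have hv: "h = (\<lambda>x\<in>V. x)" if v: "v \<in> V" "h v = v" for v
  proof (rule extensionalityI)
    show "h \<in> extensional V" using hB unfolding Bij_def by blast
    show "(\<lambda>x\<in>V. x) \<in> extensional V" by simp
    fix u assume u: "u \<in> V"
    obtain g where g: "g \<in> P" "g v = u" using trV v u by blast
    have "h u = h (g v)" using g by simp
    also have "\<dots> = g (h v)" using comm g(1) v(1) by metis
    also have "\<dots> = u" using v g by simp
    finally show "h u = (\<lambda>x\<in>V. x) u" using u by simp
  qed
  have he: "h = (\<lambda>x\<in>V. x)" if e: "e \<in> E" "h ` e = e" for e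
  proof (rule ccontr)
    assume ne: "h \<noteq> (\<lambda>x\<in>V. x)"
    have fixE: "h ` f = f" if f: "f \<in> E" for f
    proof -
      obtain g where g: "g \<in> P" "g ` e = f" using trE e(1) f by blast
      have eV: "e \<subseteq> V" using sg e(1) unfolding simple_graph_def by blast
      have "h ` f = (\<lambda>v. h (g v)) ` e" using g by auto
      also have "\<dots> = (\<lambda>v. g (h v)) ` e"
      proof (rule image_cong)
        fix v assume "v \<in> e"
        thus "h (g v) = g (h v)" using comm g(1) eV by (metis subsetD)
      qed simp
      also have "\<dots> = g ` (h ` e)" by auto
      also have "\<dots> = f" using e g by simp
      finally show ?thesis .
    qed
    have xV: "x \<in> V" using sg e1 unfolding simple_graph_def by blast
    have hx: "h x \<noteq> x" using hv xV ne by blast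
    have "h x \<in> {x, y}" using fixE[OF e1] by blast
    hence "h x = y" using hx by blast
    moreover have "h x \<in> {x, w}" using fixE[OF e2] by blast
    hence "h x = w" using hx by blast
    ultimately show False using yw by simp
  qed
  show ?thesis using hv he by blast
qed

lemma edge_action:
  assumes sg: "simple_graph V E" and GB: "subgroup G (BijGroup V)" and Ga: "G \<subseteq> graph_aut V E"
  shows "group_action (BijGroup V\<lparr>carrier := G\<rparr>) E (\<lambda>g. \<lambda>e\<in>E. g ` e)"
proof -
  have grpB: "group (BijGroup V)" by (rule group_BijGroup)
  have GBij: "G \<subseteq> Bij V" using subgroup.subset[OF GB] by (simp add: BijGroup_def)
  have finE: "finite E"
  proof -
    have "E \<subseteq> Pow V" using sg unfolding simple_graph_def by blast
    moreover have "finite V" using sg unfolding simple_graph_def by blast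
    ultimately show ?thesis by (meson finite_Pow_iff finite_subset)
  qed
  have inBij: "(\<lambda>e\<in>E. g ` e) \<in> Bij E" if g: "g \<in> G" for g
  proof -
    have maps: "(\<lambda>e\<in>E. g ` e) ` E \<subseteq> E" using aut_maps_edge[OF sg] g Ga by auto
    have injg: "inj_on g V" using g GBij unfolding Bij_def bij_betw_def by blast
    have inj: "inj_on (\<lambda>e\<in>E. g ` e) E"
    proof (rule inj_onI)
      fix e f assume "e \<in> E" "f \<in> E" "(\<lambda>e\<in>E. g ` e) e = (\<lambda>e\<in>E. g ` e) f"
      moreover have "e \<subseteq> V" "f \<subseteq> V" using \<open>e \<in> E\<close> \<open>f \<in> E\<close> sg unfolding simple_graph_def by auto
      ultimately show "e = f" using inj_on_image_eq_iff[OF injg] by simp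
    qed
    have "(\<lambda>e\<in>E. g ` e) ` E = E" using endo_inj_surj[OF finE maps inj] .
    thus ?thesis unfolding Bij_def bij_betw_def using inj by simp
  qed
  have hom: "(\<lambda>g. \<lambda>e\<in>E. g ` e) \<in> hom (BijGroup V\<lparr>carrier := G\<rparr>) (BijGroup E)"
  proof (rule homI)
    fix g assume "g \<in> carrier (BijGroup V\<lparr>carrier := G\<rparr>)"
    thus "(\<lambda>e\<in>E. g ` e) \<in> carrier (BijGroup E)" using inBij by (simp add: BijGroup_def)
  next
    fix g h assume "g \<in> carrier (BijGroup V\<lparr>carrier := G\<rparr>)" "h \<in> carrier (BijGroup V\<lparr>carrier := G\<rparr>)"
    hence g: "g \<in> G" and h: "h \<in> G" by auto
    have "g \<otimes>\<^bsub>BijGroup V\<lparr>carrier := G\<rparr>\<^esub> h = compose V g h"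
      using g h GBij bij_mult[of g V h] by auto
    moreover have "(\<lambda>e\<in>E. g ` e) \<otimes>\<^bsub>BijGroup E\<^esub> (\<lambda>e\<in>E. h ` e) = compose E (\<lambda>e\<in>E. g ` e) (\<lambda>e\<in>E. h ` e)"
      using bij_mult inBij g h by blast
    moreover have "(\<lambda>e\<in>E. compose V g h ` e) = compose E (\<lambda>e\<in>E. g ` e) (\<lambda>e\<in>E. h ` e)"
    proof (rule ext)
      fix e
      show "(\<lambda>e\<in>E. compose V g h ` e) e = compose E (\<lambda>e\<in>E. g ` e) (\<lambda>e\<in>E. h ` e) e"
      proof (cases "e \<in> E")
        case True
        have eV: "e \<subseteq> V" using True sg unfolding simple_graph_def by blast
        have he: "h ` e \<in> E" using aut_maps_edge[OF sg] h Ga True by blast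
        have "compose V g h ` e = (\<lambda>x. g (h x)) ` e"
        proof (rule image_cong)
          fix x assume "x \<in> e" thus "compose V g h x = g (h x)" using eV by (auto simp: compose_def)
        qed simp
        also have "\<dots> = g ` h ` e" by (simp add: image_image)
        finally show ?thesis using True he by (simp add: compose_def)
      next
        case False
        then show ?thesis by (simp add: compose_def)
      qed
    qed
    ultimately show "(\<lambda>e\<in>E. (g \<otimes>\<^bsub>BijGroup V\<lparr>carrier := G\<rparr>\<^esub> h) ` e) =
        (\<lambda>e\<in>E. g ` e) \<otimes>\<^bsub>BijGroup E\<^esub> (\<lambda>e\<in>E. h ` e)" by simp
  qed
  show ?thesis unfolding group_action_def group_hom_def group_hom_axioms_def
    using hom group.subgroup_imp_group[OF grpB GB] group_BijGroup by blast
qed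

lemma vertex_action:
  assumes GB: "subgroup G (BijGroup V)"
  shows "group_action (BijGroup V\<lparr>carrier := G\<rparr>) V (\<lambda>g. g)"
proof -
  have grpB: "group (BijGroup V)" by (rule group_BijGroup)
  have hom: "(\<lambda>g. g) \<in> hom (BijGroup V\<lparr>carrier := G\<rparr>) (BijGroup V)"
    using subgroup.subset[OF GB] by (auto intro!: homI)
  show ?thesis unfolding group_action_def group_hom_def group_hom_axioms_def
    using hom group.subgroup_imp_group[OF grpB GB] group_BijGroup by blast
qed

theorem corollary2p13:
  fixes p :: nat and V :: "'a set" and E :: "'a set set" and G :: "('a \<Rightarrow> 'a) set"
  assumes "Factorial_Ring.prime p"
    and "simple_graph V E" and "connected_graph V E" and "card V \<ge> 3"
    and "is_prime_power p (card V)" and "is_prime_power p (card E)"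
    and "subgroup G (BijGroup V)" and "G \<subseteq> graph_aut V E"
    and "\<forall>x\<in>V. \<forall>y\<in>V. \<exists>g\<in>G. g x = y"
    and "\<forall>e\<in>E. \<forall>f\<in>E. \<exists>g\<in>G. g ` e = f"
  shows "\<exists>g\<in>G. semiregular_on_vertices V g \<and> semiregular_on_edges V E g"
proof -
  note p = assms(1) and sg = assms(2) and GB = assms(7)
  let ?B = "BijGroup V"
  define G' where "G' = ?B\<lparr>carrier := G\<rparr>"
  have grpB: "group ?B" by (rule group_BijGroup)
  have grpG': "group G'" unfolding G'_def using group.subgroup_imp_group[OF grpB GB] .
  have finV: "finite V" using sg unfolding simple_graph_def by blast
  have GBij: "G \<subseteq> Bij V" using subgroup.subset[OF GB] by (simp add: BijGroup_def)
  have finG: "finite G" using finite_subset[OF GBij finite_Bij[OF finV]] .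
  have cG: "card G \<noteq> 0" using finG subgroup.one_closed[OF GB] card_0_eq by blast
  have p1: "p > 1" using p prime_gt_1_nat by blast
  have nu: "\<not> is_unit p" using p not_prime_unit by blast
  obtain m where m0: "card G = p ^ multiplicity p (card G) * m" "\<not> p dvd m"
    using multiplicity_decompose'[OF cG nu] by blast
  define a where "a = multiplicity p (card G)"
  have m: "card G = p ^ a * m" "\<not> p dvd m" using m0 unfolding a_def by auto
  have ordG': "order G' = p ^ a * m" unfolding G'_def order_def using m by simp
  have finG': "finite (carrier G')" unfolding G'_def using finG by simp
  obtain P where P: "subgroup P G'" "card P = p ^ a"
    using sylow_thm[OF p grpG' ordG' finG'] by blast
  have PB: "subgroup P ?B" using group.incl_subgroup[OF grpB GB] P(1) unfolding G'_def by blast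
  have PG: "P \<subseteq> G" using subgroup.subset[OF P(1)] unfolding G'_def by simp
  have PBij: "P \<subseteq> Bij V" using PG GBij by blast
  interpret AV: group_action G' V "\<lambda>g. g" unfolding G'_def using vertex_action[OF GB] .
  interpret AE: group_action G' E "\<lambda>g. \<lambda>e\<in>E. g ` e"
    unfolding G'_def using edge_action[OF sg GB assms(8)] .
  obtain k where k: "card V = p ^ k" using assms(5) unfolding is_prime_power_def by blast
  obtain l where l: "card E = p ^ l" using assms(6) unfolding is_prime_power_def by blast
  have trV': "\<forall>x\<in>V. \<forall>y\<in>V. \<exists>g\<in>carrier G'. g x = y" unfolding G'_def using assms(9) by simp
  have trE': "\<forall>x\<in>E. \<forall>y\<in>E. \<exists>g\<in>carrier G'. (\<lambda>e\<in>E. g ` e) x = y"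
    unfolding G'_def using assms(10) by simp
  have trV: "\<forall>x\<in>V. \<forall>y\<in>V. \<exists>g\<in>P. g x = y"
    using AV.sylow_transitive[OF p finG' ordG' m(2) P(1) P(2) trV' k] by blast
  have trE: "\<forall>e\<in>E. \<forall>f\<in>E. \<exists>g\<in>P. g ` e = f"
  proof (intro ballI)
    fix e f assume ef: "e \<in> E" "f \<in> E"
    then obtain g where "g \<in> P" "(\<lambda>e\<in>E. g ` e) e = f"
      using AE.sylow_transitive[OF p finG' ordG' m(2) P(1) P(2) trE' l] by blast
    thus "\<exists>g\<in>P. g ` e = f" using ef by auto
  qed
  obtain x0 y0 w0 where nb: "{x0, y0} \<in> E" "{x0, w0} \<in> E" "y0 \<noteq> w0"
    using two_nbrs[OF sg assms(3,4)] by blast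
  define P'' where "P'' = ?B\<lparr>carrier := P\<rparr>"
  have grpP: "group P''" unfolding P''_def using group.subgroup_imp_group[OF grpB PB] .
  have ordP: "order P'' = p ^ a" unfolding P''_def order_def using P(2) by simp
  have a1: "a \<ge> 1"
  proof (rule ccontr)
    assume "\<not> a \<ge> 1"
    hence "card P = 1" using P(2) by simp
    moreover have "\<one>\<^bsub>?B\<^esub> \<in> P" using subgroup.one_closed[OF PB] .
    ultimately have P1: "P = {\<one>\<^bsub>?B\<^esub>}" using card_1_singletonE by blast
    have "\<not> V \<subseteq> {x0}" using assms(4) card_mono[OF _ , of "{x0}" V] by force
    then obtain y where y: "y \<in> V" "y \<noteq> x0" by blast
    have x0V: "x0 \<in> V" using sg nb(1) unfolding simple_graph_def by blast
    obtain g where "g \<in> P" "g x0 = y" using trV x0V y(1) by blast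
    hence "y = x0" using P1 x0V by (simp add: BijGroup_def)
    thus False using y by simp
  qed
  obtain z where z: "z \<in> P" "z \<noteq> \<one>\<^bsub>?B\<^esub>" "\<forall>g\<in>P. g \<otimes>\<^bsub>?B\<^esub> z = z \<otimes>\<^bsub>?B\<^esub> g"
    using group.center_nontrivial[OF grpP p ordP a1] unfolding P''_def by auto
  have one: "\<one>\<^bsub>?B\<^esub> = (\<lambda>x\<in>V. x)" by (simp add: BijGroup_def)
  have main: "((\<forall>v\<in>V. (z [^]\<^bsub>?B\<^esub> n) v = v \<longrightarrow> z [^]\<^bsub>?B\<^esub> n = \<one>\<^bsub>?B\<^esub>) \<and>
         (\<forall>e\<in>E. (z [^]\<^bsub>?B\<^esub> n) ` e = e \<longrightarrow> z [^]\<^bsub>?B\<^esub> n = \<one>\<^bsub>?B\<^esub>))" for n :: nat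
  proof -
    let ?h = "z [^]\<^bsub>?B\<^esub> n"
    have hc: "?h \<in> P" "\<forall>g\<in>P. g \<otimes>\<^bsub>?B\<^esub> ?h = ?h \<otimes>\<^bsub>?B\<^esub> g"
      using pow_in_comm[OF grpB PB z(1) z(3)] by blast+
    have hB: "?h \<in> Bij V" using hc(1) PBij by blast
    have comm: "\<forall>g\<in>P. \<forall>v\<in>V. g (?h v) = ?h (g v)"
    proof (intro ballI)
      fix g v assume g: "g \<in> P" and v: "v \<in> V"
      have gB: "g \<in> Bij V" using g PBij by blast
      have "compose V g ?h = compose V ?h g"
        using hc(2) g bij_mult[OF gB hB] bij_mult[OF hB gB] by simp
      hence "compose V g ?h v = compose V ?h g v" by simp
      thus "g (?h v) = ?h (g v)" using v by (simp add: compose_def)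
    qed
    show ?thesis using key[OF sg nb hB trV trE PBij comm] one by simp
  qed
  have zG: "z \<in> G" using z(1) PG by blast
  show ?thesis
    using zG z(2) main unfolding semiregular_on_vertices_def semiregular_on_edges_def by blast
qed

end
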